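(* If $L\subseteq\mathbb{R}$ is a Luzin set (with the subspace topology), then the game $G_1(\mathcal{C}_\mathcal{O},\mathcal{C}_\mathcal{O})$ on $L$ is undetermined: neither Alice nor Bob has a winning strategy.
   Context: A Luzin set is an uncountable set $L$ of reals such that $L\cap M$ is countable for every meager set $M\subseteq\mathbb{R}$. $\mathcal{C}_\mathcal{O}$ is the collection of all covers of the space by clopen sets. Game $G_1(\mathcal{C}_\mathcal{O},\mathcal{C}_\mathcal{O})$: in each inning $n\in\omega$ Alice chooses a clopen cover $\mathcal{U}_n$ of the space, Bob chooses $U_n\in\mathcal{U}_n$; Bob wins iff $\{U_n:n\in\omega\}$ covers the space, Alice wins otherwise. A strategy is a function from the opponent's previous moves to a legal move; it is winning if every play following it is won by that player. *)

theory Defs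
  imports "HOL-Analysis.Analysis"
begin

definition nowhere_dense :: "real set \<Rightarrow> bool" where
  "nowhere_dense A \<longleftrightarrow> interior (closure A) = {}"

definition meager :: "real set \<Rightarrow> bool" where
  "meager M \<longleftrightarrow> (\<exists>F :: nat \<Rightarrow> real set. (\<forall>n. nowhere_dense (F n)) \<and> M \<subseteq> (\<Union>n. F n))"

definition luzin_set :: "real set \<Rightarrow> bool" where
  "luzin_set L \<longleftrightarrow> uncountable L \<and> (\<forall>M. meager M \<longrightarrow> countable (L \<inter> M))"

definition clopen_in :: "real set \<Rightarrow> real set \<Rightarrow> bool" where
  "clopen_in L U \<longleftrightarrow> openin (top_of_set L) U \<and> closedin (top_of_set L) U"

definition clopen_cover :: "real set \<Rightarrow> real set set \<Rightarrow> bool" where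
  "clopen_cover L \<U> \<longleftrightarrow> (\<forall>U\<in>\<U>. clopen_in L U) \<and> \<Union>\<U> = L"

definition alice_strategy :: "real set \<Rightarrow> (real set list \<Rightarrow> real set set) \<Rightarrow> bool" where
  "alice_strategy L \<sigma> \<longleftrightarrow> (\<forall>bs. clopen_cover L (\<sigma> bs))"

text \<open>A play follows Alice's strategy if in inning n Alice plays sigma applied to Bob's moves
  U 0, ..., U (n-1) and Bob picks U n from it. Alice wins iff Bob's picks fail to cover L.\<close>
definition alice_winning :: "real set \<Rightarrow> (real set list \<Rightarrow> real set set) \<Rightarrow> bool" where
  "alice_winning L \<sigma> \<longleftrightarrow> alice_strategy L \<sigma> \<and>
     (\<forall>U :: nat \<Rightarrow> real set. (\<forall>n. U n \<in> \<sigma> (map U [0..<n])) \<longrightarrow> (\<Union>n. U n) \<noteq> L)"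

text \<open>Bob's strategy: from Alice's moves so far (nonempty list of clopen covers, the last
  one being the current cover) to an element of the current cover.\<close>
definition bob_strategy :: "real set \<Rightarrow> (real set set list \<Rightarrow> real set) \<Rightarrow> bool" where
  "bob_strategy L \<tau> \<longleftrightarrow>
     (\<forall>cs. cs \<noteq> [] \<and> (\<forall>\<U>\<in>set cs. clopen_cover L \<U>) \<longrightarrow> \<tau> cs \<in> last cs)"

definition bob_winning :: "real set \<Rightarrow> (real set set list \<Rightarrow> real set) \<Rightarrow> bool" where
  "bob_winning L \<tau> \<longleftrightarrow> bob_strategy L \<tau> \<and>
     (\<forall>\<C> :: nat \<Rightarrow> real set set. (\<forall>n. clopen_cover L (\<C> n)) \<longrightarrow>
        (\<Union>n. \<tau> (map \<C> [0..<Suc n])) = L)"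

end

theory Submission
  imports Defs
begin


lemma meager_single:
  assumes "nowhere_dense F" shows "meager F"
  unfolding meager_def using assms by (intro exI[of _ "\<lambda>n. F"]) auto

lemma luzin_no_interval:
  assumes L: "luzin_set L" and pq: "p < q"
  shows "\<not> {p<..<q} \<subseteq> L"
proof
  assume sub: "{p<..<q} \<subseteq> L"
  define r where "r = from_nat_into (\<rat> :: real set)"
  have rQ: "range r = \<rat>"
    unfolding r_def by (rule range_from_nat_into) (auto simp: countable_rat intro: exI[of _ 0])
  define e where "e = (q - p) / 8"
  have e: "e > 0" using pq by (simp add: e_def)
  define rad where "rad n = e * (1/2)^Suc n" for n
  have rad: "rad n > 0" for n using e by (simp add: rad_def)
  define Ob where "Ob = (\<Union>n. ball (r n) (rad n))"
  have oOb: "open Ob" unfolding Ob_def by auto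
  have QO: "\<rat> \<subseteq> Ob"
  proof
    fix x :: real assume "x \<in> \<rat>"
    then obtain n where "x = r n" using rQ by (metis rangeE)
    then show "x \<in> Ob" unfolding Ob_def using rad[of n] by (auto intro!: exI[of _ n])
  qed
  have mO: "emeasure lborel Ob \<le> ennreal (2*e)"
  proof -
    have "emeasure lborel Ob \<le> (\<Sum>n. emeasure lborel (ball (r n) (rad n)))"
      unfolding Ob_def by (rule emeasure_subadditive_countably) auto
    also have "\<dots> = (\<Sum>n. ennreal (2 * rad n))"
    proof (intro suminf_cong)
      fix n have "r n - rad n \<le> r n + rad n" using rad[of n] by simp
      then show "emeasure lborel (ball (r n) (rad n)) = ennreal (2 * rad n)"
        by (simp add: ball_eq_greaterThanLessThan)
    qed
    also have "\<dots> = ennreal (2*e)"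
    proof (rule suminf_ennreal_eq)
      show "0 \<le> 2 * rad n" for n using rad[of n] by simp
      have "(\<lambda>n. (2*e) * (1/2::real)^Suc n) sums ((2*e) * 1)"
        by (rule sums_mult[OF power_half_series])
      then show "(\<lambda>n. 2 * rad n) sums (2*e)" by (simp add: rad_def mult.assoc)
    qed
    finally show ?thesis .
  qed
  define F where "F = {p<..<q} - Ob"
  have nd: "nowhere_dense F"
    unfolding nowhere_dense_def
  proof (rule ccontr)
    assume "interior (closure F) \<noteq> {}"
    then obtain x where x: "x \<in> interior (closure F)" by auto
    have cl: "closure F \<subseteq> - Ob"
      by (rule closure_minimal) (auto simp: F_def oOb open_Compl[of Ob, simplified] closed_def)
    obtain d where d: "d > 0" "ball x d \<subseteq> closure F"
      using x by (meson open_contains_ball_eq open_interior interior_subset subset_trans)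
    obtain y where "y \<in> \<rat>" "y \<in> ball x d"
      using Rats_dense_in_real[of "x - d" "x + d"] d(1) by (auto simp: dist_real_def)
    then show False using d cl QO by (auto simp: subset_iff)
  qed
  have "countable (L \<inter> F)" using L meager_single[OF nd] unfolding luzin_set_def by auto
  moreover have "L \<inter> F = F" using sub by (auto simp: F_def)
  ultimately have cF: "countable F" by simp
  have "ennreal (q - p) = emeasure lborel ({p<..<q} - F)"
    using pq by (subst emeasure_Diff_null_set) (auto intro: countable_imp_null_set_lborel[OF cF])
  also have "\<dots> \<le> emeasure lborel Ob"
    by (rule emeasure_mono) (auto simp: F_def oOb)
  also have "\<dots> \<le> ennreal (2*e)" by (rule mO)
  finally have "q - p \<le> 2 * e" using e by (simp add: ennreal_le_iff)
  then show False using pq by (simp add: e_def)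
qed

definition cut :: "real set \<Rightarrow> real \<Rightarrow> real set set" where
  "cut L c = {L \<inter> {..<c}, L \<inter> {c<..}}"

lemma cut_cover: assumes "c \<notin> L" shows "clopen_cover L (cut L c)"
proof -
  have a: "clopen_in L (L \<inter> {..<c})"
    unfolding clopen_in_def
  proof
    show "openin (top_of_set L) (L \<inter> {..<c})" by (auto simp: openin_open_Int)
    have "L \<inter> {..<c} = L \<inter> {..c}" using assms by (auto simp: less_le)
    then show "closedin (top_of_set L) (L \<inter> {..<c})" by (auto simp: closedin_closed_Int)
  qed
  have b: "clopen_in L (L \<inter> {c<..})"
    unfolding clopen_in_def
  proof
    show "openin (top_of_set L) (L \<inter> {c<..})" by (auto simp: openin_open_Int)
    have "L \<inter> {c<..} = L \<inter> {c..}" using assms by (auto simp: less_le)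
    then show "closedin (top_of_set L) (L \<inter> {c<..})" by (auto simp: closedin_closed_Int)
  qed
  have "\<Union>(cut L c) = L" using assms by (auto simp: cut_def) (metis linorder_neqE_linordered_idom)
  then show ?thesis using a b unfolding clopen_cover_def cut_def by auto
qed

lemma no_bob:
  assumes L: "luzin_set L" shows "\<not> bob_winning L \<tau>"
proof
  assume bw: "bob_winning L \<tau>"
  have bs: "bob_strategy L \<tau>" and bw2: "\<And>Cv. (\<forall>n. clopen_cover L (Cv n)) \<Longrightarrow> (\<Union>n. \<tau> (map Cv [0..<Suc n])) = L"
    using bw unfolding bob_winning_def by auto
  define P where "P = {(a,b::real). a \<in> \<rat> \<and> b \<in> \<rat> \<and> a < b}"
  define cf where "cf = (\<lambda>(a,b). SOME c. c \<in> {a<..<b} \<and> c \<notin> L)"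
  define C where "C = cf ` P"
  have cP: "countable P" unfolding P_def
    by (rule countable_subset[of _ "\<rat> \<times> \<rat>"]) (auto simp: countable_rat)
  have cC: "countable C" unfolding C_def using cP by auto
  have cfP: "cf (a,b) \<in> {a<..<b} \<and> cf (a,b) \<notin> L" if "(a,b) \<in> P" for a b
  proof -
    have "a < b" using that by (simp add: P_def)
    then have "\<exists>c. c \<in> {a<..<b} \<and> c \<notin> L" using luzin_no_interval[OF L] by blast
    then show ?thesis unfolding cf_def by simp (rule someI_ex)
  qed
  have CL: "c \<notin> L" if "c \<in> C" for c using that cfP unfolding C_def by auto
  have sep: "\<exists>c\<in>C. x < c \<and> c < y" if "x < y" for x y
  proof -
    have m1: "x < (x+y)/2" and m2: "(x+y)/2 < y" using that by auto
    obtain a where a: "a \<in> \<rat>" "x < a" "a < (x+y)/2" using Rats_dense_in_real[OF m1] by blast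
    obtain b where b: "b \<in> \<rat>" "(x+y)/2 < b" "b < y" using Rats_dense_in_real[OF m2] by blast
    have "(a,b) \<in> P" using a b by (simp add: P_def)
    then show ?thesis using cfP[of a b] a b unfolding C_def by force
  qed
  define A where "A h = {x \<in> L. \<forall>c\<in>C. x \<in> \<tau> (map (cut L) h @ [cut L c])}" for h
  have Asub: "x = y" if h: "set h \<subseteq> C" and x: "x \<in> A h" and y: "y \<in> A h" for h x y
  proof (rule ccontr)
    assume "x \<noteq> y"
    have main: False if "u < v" "u \<in> A h" "v \<in> A h" for u v
    proof -
      obtain c where c: "c \<in> C" "u < c" "c < v" using sep[OF \<open>u < v\<close>] by auto
      let ?cs = "map (cut L) h @ [cut L c]"
      have cc: "\<forall>U\<in>set ?cs. clopen_cover L U" using h c CL by (auto intro!: cut_cover)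
      have ne: "?cs \<noteq> []" by simp
      have "\<tau> ?cs \<in> last ?cs" using bs cc ne unfolding bob_strategy_def by blast
      then have "\<tau> ?cs \<in> cut L c" by simp
      then have tc: "\<tau> ?cs = L \<inter> {..<c} \<or> \<tau> ?cs = L \<inter> {c<..}" by (simp add: cut_def)
      have uu: "u \<in> \<tau> ?cs" using that(2) c(1) unfolding A_def by simp
      have vv: "v \<in> \<tau> ?cs" using that(3) c(1) unfolding A_def by simp
      show False
      proof (rule disjE[OF tc])
        assume "\<tau> ?cs = L \<inter> {..<c}" then show False using vv c(3) by simp
      next
        assume "\<tau> ?cs = L \<inter> {c<..}" then show False using uu c(2) by simp
      qed
    qed
    show False
    proof (cases x y rule: linorder_cases)
      case less then show ?thesis using main x y by blast
    next
      case equal then show ?thesis using \<open>x \<noteq> y\<close> by simp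
    next
      case greater then show ?thesis using main x y by blast
    qed
  qed
  have "countable (A h)" if "set h \<subseteq> C" for h
  proof (cases "A h = {}")
    case False
    then obtain x where "x \<in> A h" by auto
    then have "A h = {x}" using Asub[OF that] by auto
    then show ?thesis by simp
  qed simp
  then have "countable (\<Union>h\<in>lists C. A h)" using cC by (intro countable_UN) auto
  then have "\<not> L \<subseteq> (\<Union>h\<in>lists C. A h)" using L unfolding luzin_set_def using countable_subset by blast
  then obtain x where xL: "x \<in> L" and xn: "x \<notin> (\<Union>h\<in>lists C. A h)" by blast
  have xA: "x \<notin> A h" if "set h \<subseteq> C" for h using xn that in_lists_conv_set[of h C] by blast
  define ch where "ch h = (SOME c. c \<in> C \<and> x \<notin> \<tau> (map (cut L) h @ [cut L c]))" for h
  have ch: "ch h \<in> C \<and> x \<notin> \<tau> (map (cut L) h @ [cut L (ch h)])" if "set h \<subseteq> C" for h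
  proof -
    have "\<exists>c. c \<in> C \<and> x \<notin> \<tau> (map (cut L) h @ [cut L c])" using xA[OF that] xL unfolding A_def by auto
    then show ?thesis unfolding ch_def by (rule someI_ex)
  qed
  define hs where "hs = rec_nat [] (\<lambda>n h. h @ [ch h])"
  have hs0: "hs 0 = []" and hsS: "hs (Suc n) = hs n @ [ch (hs n)]" for n by (simp_all add: hs_def)
  have hsC: "set (hs n) \<subseteq> C" for n
    by (induction n) (auto simp: hs0 hsS dest: ch)
  define Cv where "Cv n = cut L (ch (hs n))" for n
  have mapCv: "map (\<lambda>i. ch (hs i)) [0..<n] = hs n" for n
    by (induction n) (auto simp: hs0 hsS)
  have eq: "map Cv [0..<Suc n] = map (cut L) (hs n @ [ch (hs n)])" for n
  proof -
    have "map Cv [0..<Suc n] = map (cut L) (map (\<lambda>i. ch (hs i)) [0..<Suc n])" by (simp add: Cv_def)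
    also have "\<dots> = map (cut L) (hs n @ [ch (hs n)])" using mapCv[of "Suc n"] by (simp only: hsS)
    finally show ?thesis .
  qed
  have cvc: "clopen_cover L (Cv n)" for n
  proof -
    have "ch (hs n) \<in> C" using ch[OF hsC[of n]] by blast
    then show ?thesis unfolding Cv_def by (intro cut_cover CL)
  qed
  have "(\<Union>n. \<tau> (map Cv [0..<Suc n])) = L" using bw2 cvc by blast
  then have "x \<in> (\<Union>n. \<tau> (map Cv [0..<Suc n]))" using xL by simp
  then obtain n where "x \<in> \<tau> (map Cv [0..<Suc n])" by blast
  then have "x \<in> \<tau> (map (cut L) (hs n @ [ch (hs n)]))" by (simp only: eq)
  moreover have "x \<notin> \<tau> (map (cut L) (hs n @ [ch (hs n)]))" using ch[OF hsC[of n]] by simp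
  ultimately show False by contradiction
qed



locale actx =
  fixes L :: "real set" and \<sigma> :: "real set list \<Rightarrow> real set set" and d :: "nat \<Rightarrow> real"
  assumes strat: "\<And>bs. clopen_cover L (\<sigma> bs)"
  and dL: "\<And>j. d j \<in> L"
  and dense: "\<And>x e m. x \<in> L \<Longrightarrow> e > 0 \<Longrightarrow> \<exists>j\<ge>m. dist (d j) x < e"
  and luz: "\<And>M. meager M \<Longrightarrow> countable (L \<inter> M)"
begin

definition Wf :: "real set \<Rightarrow> real set" where "Wf U = (SOME W. open W \<and> U = L \<inter> W)"

lemma Wf: assumes "U \<in> \<sigma> bs" shows "open (Wf U)" "U = L \<inter> Wf U"
proof -
  have "openin (top_of_set L) U" using strat[of bs] assms unfolding clopen_cover_def clopen_in_def by auto
  then have "\<exists>W. open W \<and> U = L \<inter> W" by (simp add: openin_open)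
  then have "open (Wf U) \<and> U = L \<inter> Wf U" unfolding Wf_def by (rule someI_ex)
  then show "open (Wf U)" "U = L \<inter> Wf U" by auto
qed

lemma Wf_sub: assumes "U \<in> \<sigma> bs" shows "U \<subseteq> Wf U"
proof -
  obtain W where W: "Wf U = W" by blast
  have e: "U = L \<inter> W" using Wf(2)[OF assms] by (simp only: W)
  have "U \<subseteq> W" by (subst e) (rule Int_lower2)
  then show ?thesis by (simp only: W)
qed

lemma Wf_mem: assumes "U \<in> \<sigma> bs" "x \<in> L" "x \<in> Wf U" shows "x \<in> U"
proof -
  obtain W where W: "Wf U = W" by blast
  have e: "U = L \<inter> W" using Wf(2)[OF assms(1)] by (simp only: W)
  have "x \<in> L \<inter> W" using assms(2,3) by (simp add: W)
  then show ?thesis by (subst e)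
qed

lemma sig_sub: "U \<in> \<sigma> bs \<Longrightarrow> U \<subseteq> L"
  using strat[of bs] unfolding clopen_cover_def by auto

definition ch :: "real set list \<Rightarrow> real \<Rightarrow> real set" where
  "ch t e = (SOME U. U \<in> \<sigma> t \<and> e \<in> U)"

lemma ch: assumes "e \<in> L" shows "ch t e \<in> \<sigma> t" "e \<in> ch t e"
proof -
  have "\<exists>U. U \<in> \<sigma> t \<and> e \<in> U" using strat[of t] assms unfolding clopen_cover_def by auto
  then have "ch t e \<in> \<sigma> t \<and> e \<in> ch t e" unfolding ch_def by (rule someI_ex)
  then show "ch t e \<in> \<sigma> t" "e \<in> ch t e" by auto
qed

definition opt :: "(nat \<Rightarrow> real set) \<Rightarrow> nat \<Rightarrow> real set" where
  "opt G k = (if even k then {d (k div 2)} else G (k div 2))"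

fun lev :: "(nat \<Rightarrow> real set) \<Rightarrow> nat \<Rightarrow> real set list set" where
  "lev G 0 = {[]}"
| "lev G (Suc k) = (\<Union>t\<in>lev G k. \<Union>e\<in>opt G k. {t @ [ch t e]})"

definition goodG :: "(nat \<Rightarrow> real set) \<Rightarrow> bool" where
  "goodG G \<longleftrightarrow> (\<forall>j. finite (G j) \<and> G j \<noteq> {} \<and> G j \<subseteq> L)"

lemma opt_L: "goodG G \<Longrightarrow> opt G k \<subseteq> L"
  using dL by (auto simp: opt_def goodG_def)

lemma opt_ne: "goodG G \<Longrightarrow> opt G k \<noteq> {}"
  by (auto simp: opt_def goodG_def)

lemma opt_fin: "goodG G \<Longrightarrow> finite (opt G k)"
  by (auto simp: opt_def goodG_def)

lemma lev_len: "t \<in> lev G k \<Longrightarrow> length t = k"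
  by (induction k arbitrary: t) auto

lemma lev_take: "t \<in> lev G m \<Longrightarrow> k \<le> m \<Longrightarrow> take k t \<in> lev G k"
proof (induction m arbitrary: t)
  case 0 then show ?case by simp
next
  case (Suc m)
  then obtain t' e where t': "t' \<in> lev G m" "t = t' @ [ch t' e]" by auto
  show ?case
  proof (cases "k = Suc m")
    case True
    then show ?thesis using Suc.prems t' lev_len[OF t'(1)] by simp
  next
    case False
    then have "k \<le> m" using Suc.prems by simp
    then have "take k t = take k t'" using t' lev_len[OF t'(1)] by simp
    then show ?thesis using Suc.IH[OF t'(1) \<open>k \<le> m\<close>] by simp
  qed
qed

lemma lev_last: "t \<in> lev G (Suc k) \<Longrightarrow> \<exists>e\<in>opt G k. t = take k t @ [ch (take k t) e] \<and> take k t \<in> lev G k"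
proof -
  assume "t \<in> lev G (Suc k)"
  then obtain t' e where t': "t' \<in> lev G k" "e \<in> opt G k" "t = t' @ [ch t' e]" by auto
  have "take k t = t'" using t' lev_len[OF t'(1)] by simp
  then show ?thesis using t' by auto
qed

lemma lev_nth: assumes "t \<in> lev G m" "k < m"
  shows "\<exists>e\<in>opt G k. t ! k = ch (take k t) e"
proof -
  have tk: "take (Suc k) t \<in> lev G (Suc k)" using lev_take[OF assms(1)] assms(2) by (simp del: lev.simps)
  from lev_last[OF tk] obtain e where e: "e \<in> opt G k"
    "take (Suc k) t = take k (take (Suc k) t) @ [ch (take k (take (Suc k) t)) e]" by blast
  have "take k (take (Suc k) t) = take k t" by simp
  then have "take (Suc k) t = take k t @ [ch (take k t) e]" using e(2) by simp
  moreover have "take (Suc k) t ! k = t ! k" using assms lev_len by simp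
  moreover have "length (take k t) = k" using assms lev_len by simp
  ultimately show ?thesis using e(1) by (metis nth_append_length)
qed

lemma lev_sig: assumes "goodG G" "t \<in> lev G m" "k < m"
  shows "t ! k \<in> \<sigma> (take k t)"
proof -
  obtain e where "e \<in> opt G k" "t ! k = ch (take k t) e" using lev_nth[OF assms(2,3)] by blast
  then show ?thesis using ch(1) opt_L[OF assms(1)] by (metis subsetD)
qed

lemma lev_ext: assumes "goodG G" "s \<in> lev G k" "k \<le> m"
  shows "\<exists>t\<in>lev G m. take k t = s"
  using assms(3)
proof (induction m)
  case 0 then show ?case using assms(2) by simp
next
  case (Suc m)
  show ?case
  proof (cases "k = Suc m")
    case True then show ?thesis using assms(2) lev_len[OF assms(2)] by (intro bexI[of _ s]) auto
  next
    case False
    then obtain t where t: "t \<in> lev G m" "take k t = s" using Suc by auto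
    obtain e where e: "e \<in> opt G m" using opt_ne[OF assms(1)] by blast
    have "t @ [ch t e] \<in> lev G (Suc m)" using t e by auto
    moreover have "take k (t @ [ch t e]) = s" using t False Suc.prems lev_len[OF t(1)] by simp
    ultimately show ?thesis by blast
  qed
qed

lemma lev_finite: "goodG G \<Longrightarrow> finite (lev G k)"
  by (induction k) (auto intro!: finite_UN_I opt_fin)

lemma lev_mono: "(\<And>j. G j \<subseteq> G' j) \<Longrightarrow> lev G k \<subseteq> lev G' k"
proof (induction k)
  case 0 then show ?case by simp
next
  case (Suc k)
  have "opt G k \<subseteq> opt G' k" using Suc.prems by (auto simp: opt_def)
  then show ?case using Suc by fastforce
qed

lemma lev_cong: "(\<And>j. j < k \<Longrightarrow> G j = G' j) \<Longrightarrow> lev G k = lev G' k"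
proof (induction k)
  case 0 then show ?case by simp
next
  case (Suc k)
  have "opt G k = opt G' k" using Suc.prems by (auto simp: opt_def)
  moreover have "lev G k = lev G' k" using Suc by simp
  ultimately show ?case by simp
qed


definition desc :: "(nat \<Rightarrow> real set) \<Rightarrow> real set list \<Rightarrow> real set list set" where
  "desc G s = {t. \<exists>m. t \<in> lev G m \<and> length s < m \<and> take (length s) t = s}"

definition Ucov :: "(nat \<Rightarrow> real set) \<Rightarrow> real set list \<Rightarrow> real set" where
  "Ucov G s = (\<Union>t\<in>desc G s. Wf (last t))"

lemma desc_last: assumes "goodG G" "t \<in> desc G s"
  shows "\<exists>bs. last t \<in> \<sigma> bs"
proof -
  obtain m where m: "t \<in> lev G m" "length s < m" using assms(2) by (auto simp: desc_def)
  have "length t = m" using lev_len[OF m(1)] .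
  moreover have "t \<noteq> []" using m(2) \<open>length t = m\<close> by auto
  ultimately have "last t = t ! (m - 1)" "m - 1 < m" using m(2) by (auto simp: last_conv_nth)
  then show ?thesis using lev_sig[OF assms(1) m(1)] by metis
qed

lemma Ucov_open: "goodG G \<Longrightarrow> open (Ucov G s)"
  unfolding Ucov_def using desc_last Wf(1) by blast

lemma catch: assumes "goodG G" "s \<in> lev G k" "k \<le> k'" "e \<in> opt G k'"
  shows "\<exists>t\<in>desc G s. e \<in> last t"
proof -
  obtain t' where t': "t' \<in> lev G k'" "take k t' = s" using lev_ext[OF assms(1,2,3)] by blast
  have eL: "e \<in> L" using opt_L[OF assms(1)] assms(4) by auto
  let ?t = "t' @ [ch t' e]"
  have t1: "?t \<in> lev G (Suc k')" using t' assms(4) by auto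
  have t2: "length s = k" using lev_len[OF assms(2)] .
  have t3: "take k ?t = s" using t' assms(3) lev_len[OF t'(1)] by simp
  have "?t \<in> desc G s" unfolding desc_def using assms(3) t1 t2 t3
    by (intro CollectI exI[of _ "Suc k'"]) simp
  moreover have "e \<in> last ?t" using ch(2)[OF eL] by simp
  ultimately show ?thesis by blast
qed

lemma dense_countable: assumes "open U" "\<And>j. j \<ge> m \<Longrightarrow> d j \<in> U"
  shows "countable (L - U)"
proof -
  have nd: "nowhere_dense (L - U)"
    unfolding nowhere_dense_def
  proof (rule ccontr)
    assume "interior (closure (L - U)) \<noteq> {}"
    then obtain x where x: "x \<in> interior (closure (L - U))" by auto
    obtain r where r: "r > 0" "ball x r \<subseteq> closure (L - U)"
      using x by (meson open_contains_ball_eq open_interior interior_subset subset_trans)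
    have xc: "x \<in> closure (L - U)" using x interior_subset by blast
    obtain y where y: "y \<in> L - U" "dist y x < r/2"
      using xc r(1) unfolding closure_approachable by (metis half_gt_zero)
    obtain j where j: "j \<ge> m" "dist (d j) y < r/2" using dense[of y "r/2" m] y r(1) by auto
    have "dist (d j) x < r/2 + r/2" using j y by (intro dist_triangle_less_add) (auto simp: dist_commute)
    then have "dist (d j) x < r" by simp
    then have "d j \<in> closure (L - U)" using r(2) by (auto simp: dist_commute)
    moreover have "closure (L - U) \<subseteq> - U"
      by (rule closure_minimal) (use assms(1) in auto)
    ultimately show False using assms(2)[OF j(1)] by auto
  qed
  have "countable (L \<inter> (L - U))" using luz meager_single[OF nd] by blast
  then show ?thesis by (simp add: Int_absorb1)
qed

definition Tree :: "(nat \<Rightarrow> real set) \<Rightarrow> real set list set" where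
  "Tree G = (\<Union>k. lev G k)"

definition Qp :: "(nat \<Rightarrow> real set) \<Rightarrow> real set" where
  "Qp G = (\<Union>s\<in>Tree G. L - Ucov G s)"

lemma Qp_sub: "Qp G \<subseteq> L" by (auto simp: Qp_def)

lemma Qp_countable: assumes "goodG G" shows "countable (Qp G)"
proof -
  have cT: "countable (Tree G)" unfolding Tree_def
    using lev_finite[OF assms] by (intro countable_UN) (auto intro: countable_finite)
  have "countable (L - Ucov G s)" if sT: "s \<in> Tree G" for s
  proof -
    obtain k where k: "s \<in> lev G k" using sT unfolding Tree_def by blast
    have "d j \<in> Ucov G s" if jk: "j \<ge> k" for j
    proof -
      have "d j \<in> opt G (2*j)" by (simp add: opt_def)
      then obtain t where "t \<in> desc G s" "d j \<in> last t" using catch[OF assms k, of "2*j"] jk by auto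
      moreover obtain bs where "last t \<in> \<sigma> bs" using desc_last[OF assms \<open>t \<in> desc G s\<close>] by blast
      ultimately show ?thesis unfolding Ucov_def using Wf(2) by blast
    qed
    then show ?thesis using dense_countable[OF Ucov_open[OF assms]] by blast
  qed
  then show ?thesis unfolding Qp_def using cT by (intro countable_UN) auto
qed


definition Gs :: "nat \<Rightarrow> nat \<Rightarrow> real set" where
  "Gs = rec_nat (\<lambda>j. {d 0})
     (\<lambda>n g j. g j \<union> (if n \<le> j then from_nat_into (Qp g \<union> {d 0}) ` {..j} else {}))"

lemma Gs0: "Gs 0 j = {d 0}" by (simp add: Gs_def)
lemma GsS: "Gs (Suc n) j = Gs n j \<union> (if n \<le> j then from_nat_into (Qp (Gs n) \<union> {d 0}) ` {..j} else {})"
  by (simp add: Gs_def)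

lemma Gs_good: "goodG (Gs n)"
proof (induction n)
  case 0 then show ?case using dL by (simp add: goodG_def Gs0)
next
  case (Suc n)
  have "from_nat_into (Qp (Gs n) \<union> {d 0}) i \<in> L" for i
    using from_nat_into[of "Qp (Gs n) \<union> {d 0}" i] Qp_sub dL by auto
  then show ?case using Suc unfolding goodG_def by (auto simp: GsS)
qed

lemma Gs_mono: "n \<le> n' \<Longrightarrow> Gs n j \<subseteq> Gs n' j"
proof (induction n' rule: dec_induct)
  case base then show ?case by simp
next
  case (step n') then show ?case by (auto simp: GsS)
qed

lemma Gs_stable: assumes "j < n" shows "Gs n j = Gs (Suc j) j"
proof -
  have "Suc j \<le> n" using assms by simp
  then show ?thesis
  proof (induction n rule: dec_induct)
    case base show ?case by (rule refl)
  next
    case (step m)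
    then have "\<not> m \<le> j" by simp
    then have "Gs (Suc m) j = Gs m j" by (simp add: GsS)
    then show ?case using step.IH by simp
  qed
qed

definition Gw :: "nat \<Rightarrow> real set" where "Gw j = Gs (Suc j) j"

lemma Gw_good: "goodG Gw"
  using Gs_good unfolding goodG_def Gw_def by blast

lemma Gs_le_Gw: "Gs n j \<subseteq> Gw j"
proof (cases "n \<le> Suc j")
  case True then show ?thesis unfolding Gw_def by (rule Gs_mono)
next
  case False then show ?thesis unfolding Gw_def using Gs_stable[of j n] by simp
qed

lemma lev_Gs_Gw: assumes "k \<le> n" shows "lev Gw k = lev (Gs n) k"
proof (rule lev_cong)
  fix j assume "j < k"
  then have "j < n" using assms by simp
  then show "Gw j = Gs n j" unfolding Gw_def by (rule Gs_stable[symmetric])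
qed

lemma key: assumes "s \<in> lev Gw k" shows "L \<subseteq> Ucov Gw s"
proof
  fix x assume xL: "x \<in> L"
  have sk: "s \<in> lev (Gs k) k" using assms lev_Gs_Gw[of k k] by simp
  have dsub: "desc (Gs k) s \<subseteq> desc Gw s"
  proof
    fix t assume "t \<in> desc (Gs k) s"
    then obtain m where m: "t \<in> lev (Gs k) m" "length s < m" "take (length s) t = s"
      unfolding desc_def by blast
    have "lev (Gs k) m \<subseteq> lev Gw m" by (rule lev_mono[OF Gs_le_Gw])
    then show "t \<in> desc Gw s" using m unfolding desc_def by blast
  qed
  show "x \<in> Ucov Gw s"
  proof (cases "x \<in> Ucov (Gs k) s")
    case True then show ?thesis using dsub unfolding Ucov_def by blast
  next
    case False
    have sT: "s \<in> Tree (Gs k)" using sk unfolding Tree_def by blast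
    have "x \<in> Qp (Gs k)" unfolding Qp_def using sT xL False by blast
    then have xm: "x \<in> Qp (Gs k) \<union> {d 0}" by simp
    have cq: "countable (Qp (Gs k) \<union> {d 0})" using Qp_countable[OF Gs_good] by simp
    obtain i where i: "from_nat_into (Qp (Gs k) \<union> {d 0}) i = x"
      using from_nat_into_surj[OF cq xm] by (elim exE)
    let ?j = "k + i"
    have "i \<in> {..?j}" by simp
    then have "from_nat_into (Qp (Gs k) \<union> {d 0}) i \<in> from_nat_into (Qp (Gs k) \<union> {d 0}) ` {..?j}"
      by (rule imageI)
    then have "x \<in> from_nat_into (Qp (Gs k) \<union> {d 0}) ` {..?j}" by (simp only: i)
    then have "x \<in> Gs (Suc k) ?j" by (simp only: GsS) simp
    then have "x \<in> Gw ?j" using Gs_le_Gw by blast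
    then have "x \<in> opt Gw (Suc (2 * ?j))" by (simp add: opt_def)
    then obtain t where t: "t \<in> desc Gw s" "x \<in> last t"
      using catch[OF Gw_good assms, of "Suc (2 * ?j)"] by auto
    obtain bs where "last t \<in> \<sigma> bs" using desc_last[OF Gw_good t(1)] by blast
    then have "x \<in> Wf (last t)" using Wf_sub t(2) by blast
    then show ?thesis unfolding Ucov_def using t(1) by blast
  qed
qed


definition Ocov :: "real set list \<Rightarrow> real set" where
  "Ocov t = (\<Union>i<length t. Wf (t ! i))"

definition V :: "real set" where "V = (\<Union>m. \<Inter>t\<in>lev Gw m. Ocov t)"

lemma V_open: "open V"
proof -
  have "open (Ocov t)" if "t \<in> lev Gw m" for t m
  proof -
    have "open (Wf (t ! i))" if "i < length t" for i
      using lev_sig[OF Gw_good \<open>t \<in> lev Gw m\<close>, of i] that lev_len[OF \<open>t \<in> lev Gw m\<close>] Wf(1) by auto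
    then show ?thesis unfolding Ocov_def by auto
  qed
  then show ?thesis unfolding V_def using lev_finite[OF Gw_good] by (intro open_UN ballI open_INT) auto
qed

lemma d_V: "d j \<in> V"
proof -
  have "d j \<in> Ocov t" if t: "t \<in> lev Gw (Suc (2*j))" for t
  proof -
    obtain e where e: "e \<in> opt Gw (2*j)" "t ! (2*j) = ch (take (2*j) t) e"
      using lev_nth[OF t, of "2*j"] by auto
    have "e = d j" using e(1) by (simp add: opt_def)
    then have "d j \<in> t ! (2*j)" using e(2) ch(2)[OF dL[of j]] by simp
    moreover have "t ! (2*j) \<in> \<sigma> (take (2*j) t)" using lev_sig[OF Gw_good t] by simp
    ultimately have "d j \<in> Wf (t ! (2*j))" using Wf_sub by blast
    moreover have "2*j < length t" using lev_len[OF t] by simp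
    ultimately show ?thesis unfolding Ocov_def by blast
  qed
  then show ?thesis unfolding V_def by blast
qed

lemma LV_countable: "countable (L - V)"
  using dense_countable[OF V_open, of 0] d_V by blast

lemma not_winning: "\<not> alice_winning L \<sigma>"
proof
  assume aw: "alice_winning L \<sigma>"
  define Y where "Y = (L - V) \<union> {d 0}"
  have cY: "countable Y" using LV_countable by (simp add: Y_def)
  have YL: "Y \<subseteq> L" using dL by (auto simp: Y_def)
  define y where "y = from_nat_into Y"
  have yY: "y i \<in> Y" for i unfolding y_def by (rule from_nat_into) (simp add: Y_def)
  define nxt where "nxt s i = (SOME t. t \<in> desc Gw s \<and> y i \<in> last t)" for s i
  have nxt: "nxt s i \<in> desc Gw s \<and> y i \<in> last (nxt s i)" if s: "s \<in> lev Gw k" for s i k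
  proof -
    have "y i \<in> Ucov Gw s" using key[OF s] yY YL by blast
    then obtain t where t: "t \<in> desc Gw s" "y i \<in> Wf (last t)" unfolding Ucov_def by blast
    obtain bs where bs: "last t \<in> \<sigma> bs" using desc_last[OF Gw_good t(1)] by blast
    have "y i \<in> last t" using Wf_mem[OF bs _ t(2)] yY YL by blast
    then have "\<exists>t. t \<in> desc Gw s \<and> y i \<in> last t" using t(1) by blast
    then show ?thesis unfolding nxt_def by (rule someI_ex)
  qed
  define st where "st = rec_nat [] (\<lambda>i s. nxt s i)"
  have st0: "st 0 = []" and stS: "st (Suc i) = nxt (st i) i" for i by (simp_all add: st_def)
  have stI: "(\<exists>k. st i \<in> lev Gw k) \<and> length (st i) \<ge> i" for i
  proof (induction i)
    case 0 then show ?case using st0 by (intro conjI exI[of _ 0]) auto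
  next
    case (Suc i)
    then obtain k where k: "st i \<in> lev Gw k" by blast
    have "nxt (st i) i \<in> desc Gw (st i)" using nxt[OF k] by blast
    then obtain m where m: "st (Suc i) \<in> lev Gw m" "length (st i) < m"
      "take (length (st i)) (st (Suc i)) = st i" unfolding desc_def stS by blast
    have "length (st (Suc i)) = m" using lev_len[OF m(1)] .
    then show ?case using m Suc.IH by auto
  qed
  have stpre: "take (length (st i)) (st (Suc i)) = st i" and stlen: "length (st i) < length (st (Suc i))" for i
  proof -
    obtain k where k: "st i \<in> lev Gw k" using stI by blast
    have "nxt (st i) i \<in> desc Gw (st i)" using nxt[OF k] by blast
    then obtain m where m: "st (Suc i) \<in> lev Gw m" "length (st i) < m"
      "take (length (st i)) (st (Suc i)) = st i" unfolding desc_def stS by blast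
    show "take (length (st i)) (st (Suc i)) = st i" using m(3) .
    show "length (st i) < length (st (Suc i))" using m(2) lev_len[OF m(1)] by simp
  qed
  have stmono: "take (length (st i)) (st i') = st i" if "i \<le> i'" for i i'
    using that
  proof (induction i' rule: dec_induct)
    case base then show ?case by simp
  next
    case (step i')
    have "length (st i) \<le> length (st i')"
      using step.IH by (metis length_take min.bounded_iff nle_le)
    then have "take (length (st i)) (st (Suc i')) = take (length (st i)) (take (length (st i')) (st (Suc i')))"
      by simp
    also have "\<dots> = take (length (st i)) (st i')" using stpre[of i'] by simp
    finally show ?case using step.IH by simp
  qed
  define b where "b n = st (Suc n) ! n" for n
  have stb: "st i ! k = b k" if "k < length (st i)" for i k
  proof -
    define I where "I = max i (Suc k)"
    have k1: "k < length (st (Suc k))" using stI[of "Suc k"] by simp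
    have "st i = take (length (st i)) (st I)" using stmono[of i I] by (simp add: I_def)
    then have a: "st i ! k = st I ! k" using that by (metis nth_take)
    have "st (Suc k) = take (length (st (Suc k))) (st I)" using stmono[of "Suc k" I] by (simp add: I_def)
    then have "st (Suc k) ! k = st I ! k" using k1 by (metis nth_take)
    then show ?thesis using a by (simp add: b_def)
  qed
  have stmap: "take n (st i) = map b [0..<n]" if "n \<le> length (st i)" for n i
    using that by (intro nth_equalityI) (auto simp: stb)
  have blev: "map b [0..<n] \<in> lev Gw n" for n
  proof -
    obtain k where k: "st n \<in> lev Gw k" using stI by blast
    have "n \<le> k" using stI[of n] lev_len[OF k] by simp
    have "take n (st n) \<in> lev Gw n" using lev_take[OF k \<open>n \<le> k\<close>] .
    then show ?thesis using stmap[of n n] stI[of n] by simp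
  qed
  have bsig: "b n \<in> \<sigma> (map b [0..<n])" for n
  proof -
    have "map b [0..<Suc n] ! n \<in> \<sigma> (take n (map b [0..<Suc n]))"
      using lev_sig[OF Gw_good blev[of "Suc n"], of n] by simp
    moreover have "take n (map b [0..<Suc n]) = map b [0..<n]" by (simp add: take_map)
    moreover have "map b [0..<Suc n] ! n = b n" by (simp del: upt_Suc)
    ultimately show ?thesis by metis
  qed
  have cover: "L \<subseteq> (\<Union>n. b n)"
  proof
    fix x assume xL: "x \<in> L"
    show "x \<in> (\<Union>n. b n)"
    proof (cases "x \<in> V")
      case True
      then obtain m where m: "\<And>t. t \<in> lev Gw m \<Longrightarrow> x \<in> Ocov t" unfolding V_def by blast
      have "x \<in> Ocov (map b [0..<m])" using m blev by blast
      then obtain i where i: "i < m" "x \<in> Wf (b i)" unfolding Ocov_def by auto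
      have "x \<in> b i" using Wf_mem[OF bsig[of i] xL i(2)] .
      then show ?thesis by blast
    next
      case False
      then have "x \<in> Y" using xL by (simp add: Y_def)
      then obtain i where i: "y i = x" using from_nat_into_surj[OF cY] unfolding y_def by blast
      obtain k where k: "st i \<in> lev Gw k" using stI by blast
      have xl: "x \<in> last (st (Suc i))" using nxt[OF k, of i] i by (simp add: stS)
      define n where "n = length (st (Suc i))"
      have n0: "n > 0" using stlen[of i] unfolding n_def by linarith
      have "last (st (Suc i)) = st (Suc i) ! (n - 1)"
        using n0 by (simp add: n_def last_conv_nth)
      also have "\<dots> = b (n - 1)" using stb n0 by (simp add: n_def)
      finally show ?thesis using xl by auto
    qed
  qed
  have "(\<Union>n. b n) \<subseteq> L" using bsig sig_sub by blast
  with cover have "(\<Union>n. b n) = L" by blast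
  moreover have "(\<Union>n. b n) \<noteq> L" using aw bsig unfolding alice_winning_def by blast
  ultimately show False by contradiction
qed

end


lemma dense_seq:
  fixes L :: "real set" assumes "L \<noteq> {}"
  shows "\<exists>d::nat\<Rightarrow>real. (\<forall>j. d j \<in> L) \<and> (\<forall>x e m. x \<in> L \<longrightarrow> e > 0 \<longrightarrow> (\<exists>j\<ge>m. dist (d j) x < e))"
proof -
  obtain x0 where x0: "x0 \<in> L" using assms by blast
  define P where "P = {(a,b::real). a \<in> \<rat> \<and> b \<in> \<rat> \<and> L \<inter> {a<..<b} \<noteq> {}}"
  define p where "p = (\<lambda>(a,b). SOME x. x \<in> L \<inter> {a<..<b})"
  have pP: "p (a,b) \<in> L \<inter> {a<..<b}" if "(a,b) \<in> P" for a b
  proof -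
    have "\<exists>x. x \<in> L \<inter> {a<..<b}" using that by (auto simp: P_def)
    then show ?thesis unfolding p_def by simp (rule someI_ex)
  qed
  define D0 where "D0 = p ` P \<union> {x0}"
  have cP: "countable P" unfolding P_def
    by (rule countable_subset[of _ "\<rat> \<times> \<rat>"]) (auto simp: countable_rat)
  have cD: "countable D0" using cP by (simp add: D0_def)
  have DL: "D0 \<subseteq> L" using pP x0 by (auto simp: D0_def)
  define d where "d j = from_nat_into D0 (fst (prod_decode j))" for j
  have D0ne: "D0 \<noteq> {}" by (simp add: D0_def)
  have dL: "d j \<in> L" for j unfolding d_def using from_nat_into[OF D0ne] DL by blast
  have dd: "\<exists>j\<ge>m. dist (d j) x < e" if x: "x \<in> L" and e: "e > 0" for x e m
  proof -
    have m1: "x - e < x" and m2: "x < x + e" using e by auto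
    obtain a where a: "a \<in> \<rat>" "x - e < a" "a < x" using Rats_dense_in_real[OF m1] by blast
    obtain b where b: "b \<in> \<rat>" "x < b" "b < x + e" using Rats_dense_in_real[OF m2] by blast
    have ab: "(a,b) \<in> P" using a b x by (auto simp: P_def)
    have q: "p (a,b) \<in> L \<inter> {a<..<b}" using pP[OF ab] .
    have pD: "p (a,b) \<in> D0" using ab by (auto simp: D0_def)
    obtain k where k: "from_nat_into D0 k = p (a,b)" using from_nat_into_surj[OF cD pD] by (elim exE)
    define j where "j = prod_encode (k, m)"
    have "j \<ge> m" unfolding j_def by (rule le_prod_encode_2)
    moreover have "d j = p (a,b)" unfolding d_def j_def using k by simp
    moreover have "dist (p (a,b)) x < e" using q a b by (auto simp: dist_real_def)
    ultimately show ?thesis by (intro exI[of _ j]) simp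
  qed
  show ?thesis by (rule exI[of _ d]) (use dL dd in blast)
qed

theorem mainTheorem14:
  fixes L :: "real set"
  assumes "luzin_set L"
  shows "(\<nexists>\<sigma>. alice_winning L \<sigma>) \<and> (\<nexists>\<tau>. bob_winning L \<tau>)"
proof
  show "\<nexists>\<tau>. bob_winning L \<tau>" using no_bob[OF assms] by blast
  show "\<nexists>\<sigma>. alice_winning L \<sigma>"
  proof
    assume "\<exists>\<sigma>. alice_winning L \<sigma>"
    then obtain \<sigma> where aw: "alice_winning L \<sigma>" by blast
    have Lne: "L \<noteq> {}" using assms unfolding luzin_set_def by (metis countable_empty)
    obtain d :: "nat \<Rightarrow> real" where dd: "(\<forall>j. d j \<in> L) \<and> (\<forall>x e m. x \<in> L \<longrightarrow> e > 0 \<longrightarrow> (\<exists>j\<ge>m. dist (d j) x < e))"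
      using dense_seq[OF Lne] by (elim exE)
    have d1: "\<And>j. d j \<in> L" using dd by blast
    have d2: "\<And>x e m. x \<in> L \<Longrightarrow> e > 0 \<Longrightarrow> \<exists>j\<ge>m. dist (d j) x < e" using dd by blast
    have strat: "\<And>bs. clopen_cover L (\<sigma> bs)" using aw unfolding alice_winning_def alice_strategy_def by blast
    have luz: "\<And>M. meager M \<Longrightarrow> countable (L \<inter> M)" using assms unfolding luzin_set_def by blast
    have "actx L \<sigma> d"
    proof (rule actx.intro)
      show "\<And>bs. clopen_cover L (\<sigma> bs)" by (rule strat)
      show "\<And>j. d j \<in> L" by (rule d1)
      show "\<And>x e m. x \<in> L \<Longrightarrow> e > 0 \<Longrightarrow> \<exists>j\<ge>m. dist (d j) x < e" by (rule d2)
      show "\<And>M. meager M \<Longrightarrow> countable (L \<inter> M)" by (rule luz)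
    qed
    then show False using actx.not_winning aw by blast
  qed
qed


end
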